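(* Let $R$ be a commutative Bezout domain. The ring $M_2(R)$ of $2\times 2$ matrices over $R$ has stable range 1.5 if and only if $R$ has stable range 1.5.
   Context: A commutative Bezout domain is a commutative integral domain with $1\ne0$ in which every finitely generated ideal is principal. $R$ has stable range 1.5 if for all $a,b\in R$ and $c\in R\setminus\{0\}$ with $(a,b,c)=1$ there is $r\in R$ with $(a+br,c)=1$. $M_2(R)$ has stable range 1.5 if for all $A,B,C\in M_2(R)$ with $C\neq 0$ which are left relatively prime, i.e. $AM_2(R)+BM_2(R)+CM_2(R)=M_2(R)$ (equivalently their left greatest common divisor is invertible), there exists $T\in M_2(R)$ such that $A+BT$ and $C$ are left relatively prime, i.e. $(A+BT)M_2(R)+CM_2(R)=M_2(R)$. *)

theory Defs
  imports "HOL-Analysis.Analysis"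
begin

definition gen_ideal :: "'a::comm_ring_1 set \<Rightarrow> 'a set" where
  "gen_ideal S = {\<Sum>s\<in>S. f s * s | f. True}"

definition bezout_domain :: "'a::idom itself \<Rightarrow> bool" where
  "bezout_domain _ \<longleftrightarrow>
     (\<forall>S::'a set. finite S \<longrightarrow> (\<exists>d. gen_ideal S = {d * r | r. True}))"

definition stable_range_1_5 :: "'a::comm_ring_1 itself \<Rightarrow> bool" where
  "stable_range_1_5 _ \<longleftrightarrow>
     (\<forall>a b c :: 'a. c \<noteq> 0 \<longrightarrow> gen_ideal {a, b, c} = UNIV \<longrightarrow>
        (\<exists>r. gen_ideal {a + b * r, c} = UNIV))"

type_synonym 'a mat2 = "'a^2^2"

definition left_rel_prime3 :: "'a::comm_ring_1 mat2 \<Rightarrow> 'a mat2 \<Rightarrow> 'a mat2 \<Rightarrow> bool" where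
  "left_rel_prime3 A B C \<longleftrightarrow> {A ** X + B ** Y + C ** Z | X Y Z. True} = (UNIV :: 'a mat2 set)"

definition left_rel_prime2 :: "'a::comm_ring_1 mat2 \<Rightarrow> 'a mat2 \<Rightarrow> bool" where
  "left_rel_prime2 A C \<longleftrightarrow> {A ** X + C ** Z | X Z. True} = (UNIV :: 'a mat2 set)"

definition mat2_stable_range_1_5 :: "'a::comm_ring_1 itself \<Rightarrow> bool" where
  "mat2_stable_range_1_5 _ \<longleftrightarrow>
     (\<forall>(A::'a mat2) (B::'a mat2) (C::'a mat2). C \<noteq> 0 \<longrightarrow> left_rel_prime3 A B C \<longrightarrow>
        (\<exists>T::'a mat2. left_rel_prime2 (A + B ** T) C))"

end

theory Submission
  imports Defs
begin

definition mk2 :: "'a \<Rightarrow> 'a \<Rightarrow> 'a \<Rightarrow> 'a \<Rightarrow> 'a::comm_ring_1 mat2" where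
  "mk2 a b c d = (\<chi> i j. if i = 1 then (if j = 1 then a else b) else (if j = 1 then c else d))"

lemma mk2_nth[simp]: "mk2 a b c d $ 1 $ 1 = a" "mk2 a b c d $ 1 $ 2 = b" "mk2 a b c d $ 2 $ 1 = c" "mk2 a b c d $ 2 $ 2 = d"
  by (auto simp: mk2_def)

lemma mult_nth: "((A::'a::comm_ring_1 mat2) ** B) $ i $ j = A$i$1 * B$1$j + A$i$2 * B$2$j"
  by (simp add: matrix_matrix_mult_def sum_2)

lemma mat1_nth[simp]: "(mat 1 :: 'a::comm_ring_1 mat2) $ 1 $ 1 = 1" "(mat 1 :: 'a::comm_ring_1 mat2) $ 2 $ 2 = 1"
  "(mat 1 :: 'a::comm_ring_1 mat2) $ 1 $ 2 = 0" "(mat 1 :: 'a::comm_ring_1 mat2) $ 2 $ 1 = 0"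
  by (auto simp: mat_def)

lemma mat2_eqI: "(M::'a mat2) $ 1 $ 1 = N $ 1 $ 1 \<Longrightarrow> M $ 1 $ 2 = N $ 1 $ 2 \<Longrightarrow> M $ 2 $ 1 = N $ 2 $ 1 \<Longrightarrow> M $ 2 $ 2 = N $ 2 $ 2 \<Longrightarrow> M = N"
  unfolding vec_eq_iff forall_2 by auto

lemma rdistrib: "((A::'a::comm_ring_1 mat2) + B) ** C = A ** C + B ** C"
  by (simp add: vec_eq_iff forall_2 mult_nth algebra_simps)

lemma diff_ldistrib: "(A::'a::comm_ring_1 mat2) ** (B - C) = A ** B - A ** C"
  by (simp add: vec_eq_iff forall_2 mult_nth algebra_simps)

lemma gen_insert:
  assumes "finite S" "s \<in> gen_ideal (insert a S)"
  shows "\<exists>r t. s = a*r + t \<and> t \<in> gen_ideal S"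
proof -
  obtain f where f: "s = (\<Sum>x\<in>insert a S. f x * x)" using assms(2) by (auto simp: gen_ideal_def)
  show ?thesis
  proof (cases "a \<in> S")
    case True
    then have "s = (\<Sum>x\<in>S. f x * x)" using f by (simp add: insert_absorb)
    then show ?thesis by (rule_tac x=0 in exI, auto simp: gen_ideal_def)
  next
    case False
    then have "s = a * f a + (\<Sum>x\<in>S. f x * x)" using f assms(1) by (simp add: mult.commute)
    then show ?thesis by (auto simp: gen_ideal_def)
  qed
qed

lemma gen_empty: "gen_ideal {} = {0}" by (auto simp: gen_ideal_def)

lemma gen_mem: assumes "finite S" "a \<in> S" shows "a*r \<in> gen_ideal S"
proof -
  have "(\<Sum>s\<in>S. (if s = a then r else 0) * s) = r * a"
  proof -
    have "(\<Sum>s\<in>S. (if s = a then r else 0) * s) = (\<Sum>s\<in>S. if s = a then r * a else 0)"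
      by (rule sum.cong) auto
    also have "\<dots> = r * a" using assms by (simp add: sum.delta)
    finally show ?thesis .
  qed
  then have "a * r = (\<Sum>s\<in>S. (if s = a then r else 0) * s) \<and> True" by (simp add: mult.commute)
  then show ?thesis unfolding gen_ideal_def mem_Collect_eq by (rule exI[of _ "\<lambda>s. if s = a then r else 0"])
qed

lemma gen_add: assumes "x \<in> gen_ideal S" "y \<in> gen_ideal S" shows "x + y \<in> gen_ideal S"
proof -
  obtain f g where "x = (\<Sum>s\<in>S. f s * s)" "y = (\<Sum>s\<in>S. g s * s)" using assms by (auto simp: gen_ideal_def)
  then have "x + y = (\<Sum>s\<in>S. (f s + g s) * s)" by (simp add: sum.distrib distrib_right)
  then have "x + y = (\<Sum>s\<in>S. (f s + g s) * s) \<and> True" by simp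
  then show ?thesis unfolding gen_ideal_def mem_Collect_eq by (rule exI[of _ "\<lambda>s. f s + g s"])
qed

lemma gen3_iff: "gen_ideal {a,b,c} = UNIV \<longleftrightarrow> (\<exists>x y z. a*x+b*y+c*(z::'a::comm_ring_1) = 1)"
proof
  assume "gen_ideal {a,b,c} = UNIV"
  then have "1 \<in> gen_ideal (insert a (insert b {c}))" by simp
  then obtain r1 t1 where "1 = a*r1 + t1" "t1 \<in> gen_ideal (insert b {c})" using gen_insert[of "insert b {c}" 1 a] by auto
  moreover from this(2) obtain r2 t2 where "t1 = b*r2 + t2" "t2 \<in> gen_ideal (insert c {})" using gen_insert[of "insert c {}" t1 b] by auto
  moreover from this(2) obtain r3 t3 where "t2 = c*r3 + t3" "t3 \<in> gen_ideal {}" using gen_insert[of "{}" t2 c] by auto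
  ultimately show "\<exists>x y z. a*x+b*y+c*z = 1" by (auto simp: gen_empty add.assoc)
next
  assume "\<exists>x y z. a*x+b*y+c*z = 1"
  then obtain x y z where e: "a*x+b*y+c*z = 1" by blast
  { fix s :: 'a
    have "s = (a*x+b*y+c*z) * s" using e by simp
    then have "s = a*(x * s) + b*(y * s) + c*(z * s)" by (simp add: algebra_simps)
    moreover have "a*(x * s) + b*(y * s) + c*(z * s) \<in> gen_ideal {a,b,c}"
      by (intro gen_add gen_mem) auto
    ultimately have "s \<in> gen_ideal {a,b,c}" by simp }
  then show "gen_ideal {a,b,c} = UNIV" by auto
qed

lemma gen2_iff: "gen_ideal {a,c} = UNIV \<longleftrightarrow> (\<exists>x z. a*x+c*(z::'a::comm_ring_1) = 1)"
proof
  assume "gen_ideal {a,c} = UNIV"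
  then have "1 \<in> gen_ideal (insert a {c})" by simp
  then obtain r1 t1 where "1 = a*r1 + t1" "t1 \<in> gen_ideal (insert c {})" using gen_insert[of "insert c {}" 1 a] by auto
  moreover from this(2) obtain r3 t3 where "t1 = c*r3 + t3" "t3 \<in> gen_ideal {}" using gen_insert[of "{}" t1 c] by auto
  ultimately show "\<exists>x z. a*x+c*z = 1" by (auto simp: gen_empty add.assoc)
next
  assume "\<exists>x z. a*x+c*z = 1"
  then obtain x z where e: "a*x+c*z = 1" by blast
  { fix s :: 'a
    have "s = (a*x+c*z) * s" using e by simp
    then have "s = a*(x * s) + c*(z * s)" by (simp add: algebra_simps)
    moreover have "a*(x * s) + c*(z * s) \<in> gen_ideal {a,c}"
      by (intro gen_add gen_mem) auto
    ultimately have "s \<in> gen_ideal {a,c}" by simp }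
  then show "gen_ideal {a,c} = UNIV" by auto
qed

lemma bez2:
  assumes "bezout_domain TYPE('a::idom)"
  shows "\<exists>d x y p q. d = a*x+b*y \<and> a = d*p \<and> (b::'a) = d*q"
proof -
  obtain d where d: "gen_ideal {a,b} = {d * r | r. True}" using assms unfolding bezout_domain_def
    by (meson finite.emptyI finite.insertI)
  have "d \<in> gen_ideal (insert a {b})" using d by (auto intro: exI[of _ 1])
  then obtain r1 t1 where "d = a*r1 + t1" "t1 \<in> gen_ideal (insert b {})" using gen_insert[of "insert b {}" d a] by auto
  moreover from this(2) obtain r3 t3 where "t1 = b*r3 + t3" "t3 \<in> gen_ideal {}" using gen_insert[of "{}" t1 b] by auto
  moreover have "a*1 \<in> gen_ideal {a,b}" "b * 1 \<in> gen_ideal {a,b}" by (intro gen_mem; simp)+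
  ultimately show ?thesis using d by (auto simp: gen_empty)
qed

lemma sr_use:
  assumes "stable_range_1_5 TYPE('a::comm_ring_1)" "c \<noteq> 0" "a*x+b*y+c*z = (1::'a)"
  shows "\<exists>r u v. (a+b*r)*u + c * v = 1"
  using assms unfolding stable_range_1_5_def gen3_iff gen2_iff by blast

lemma lrp3_iff: "left_rel_prime3 A B C \<longleftrightarrow> (\<exists>X Y Z. A ** X + B ** Y + C ** Z = (mat 1 :: 'a::comm_ring_1 mat2))"
proof
  assume h: "left_rel_prime3 A B C"
  have "mat 1 \<in> {A ** X + B ** Y + C ** Z | X Y Z. True}"
    using h unfolding left_rel_prime3_def by simp
  then show "\<exists>X Y Z. A ** X + B ** Y + C ** Z = mat 1" unfolding mem_Collect_eq by metis
next
  assume "\<exists>X Y Z. A ** X + B ** Y + C ** Z = (mat 1 :: 'a::comm_ring_1 mat2)"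
  then obtain X Y Z where e: "A ** X + B ** Y + C ** Z = (mat 1 :: 'a::comm_ring_1 mat2)" by blast
  { fix M :: "'a mat2"
    have "M = (A ** X + B ** Y + C ** Z) ** M" using e by simp
    also have "\<dots> = A ** (X ** M) + B ** (Y ** M) + C ** (Z ** M)"
      by (simp add: rdistrib matrix_mul_assoc)
    finally have "M \<in> {A ** X + B ** Y + C ** Z | X Y Z. True}" by blast }
  then show "left_rel_prime3 A B C" unfolding left_rel_prime3_def by auto
qed

lemma lrp2_iff: "left_rel_prime2 A C \<longleftrightarrow> (\<exists>X Z. A ** X + C ** Z = (mat 1 :: 'a::comm_ring_1 mat2))"
proof
  assume h: "left_rel_prime2 A C"
  have "mat 1 \<in> {A ** X + C ** Z | X Z. True}"
    using h unfolding left_rel_prime2_def by simp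
  then show "\<exists>X Z. A ** X + C ** Z = mat 1" unfolding mem_Collect_eq by metis
next
  assume "\<exists>X Z. A ** X + C ** Z = (mat 1 :: 'a::comm_ring_1 mat2)"
  then obtain X Z where e: "A ** X + C ** Z = (mat 1 :: 'a::comm_ring_1 mat2)" by blast
  { fix M :: "'a mat2"
    have "M = (A ** X + C ** Z) ** M" using e by simp
    also have "\<dots> = A ** (X ** M) + C ** (Z ** M)"
      by (simp add: rdistrib matrix_mul_assoc)
    finally have "M \<in> {A ** X + C ** Z | X Z. True}" by blast }
  then show "left_rel_prime2 A C" unfolding left_rel_prime2_def by auto
qed

lemma step1:
  fixes A B C X Y Z :: "'a::comm_ring_1 mat2"
  assumes sr: "stable_range_1_5 TYPE('a)" and h: "A ** X + B ** Y + C ** Z = mat 1"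
  shows "\<exists>T0 W0 p q. (A + B ** T0 + C ** W0)$2$1 * p + (A + B ** T0 + C ** W0)$2$2 * q = 1"
proof -
  define D where "D = B$2$1 * Y$1$2 + B$2$2 * Y$2$2 + C$2$1 * Z$1$2 + C$2$2 * Z$2$2"
  have e: "A$2$1 * X$1$2 + A$2$2 * X$2$2 + D = 1"
    using arg_cong[OF h, of "\<lambda>M. M$2$2"] by (simp add: mult_nth D_def algebra_simps)
  show ?thesis
  proof (cases "A$2$1 = 0")
    case True
    let ?T = "mk2 (Y$1$2) 0 (Y$2$2) 0" and ?W = "mk2 (Z$1$2) 0 (Z$2$2) 0"
    have "(A + B ** ?T + C ** ?W)$2$1 * 1 + (A + B ** ?T + C ** ?W)$2$2 * X$2$2 = 1"
      using e True by (simp add: mult_nth D_def algebra_simps)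
    then show ?thesis by blast
  next
    case False
    have "A$2$2 * X$2$2 + D * 1 + A$2$1 * X$1$2 = 1" using e by (simp add: algebra_simps)
    from sr_use[OF sr False this] obtain r u v where ruv: "(A$2$2 + D * r) * u + A$2$1 * v = 1" by blast
    let ?T = "mk2 0 (Y$1$2 * r) 0 (Y$2$2 * r)" and ?W = "mk2 0 (Z$1$2 * r) 0 (Z$2$2 * r)"
    have "(A + B ** ?T + C ** ?W)$2$1 * v + (A + B ** ?T + C ** ?W)$2$2 * u = 1"
      using ruv by (simp add: mult_nth D_def algebra_simps)
    then show ?thesis by blast
  qed
qed

lemma rdiff: "((A::'a::comm_ring_1 mat2) - B) ** C = A ** C - B ** C"
  by (simp add: vec_eq_iff forall_2 mult_nth algebra_simps)

lemma core:
  fixes A B C X Y Z :: "'a::idom mat2"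
  assumes bez: "bezout_domain TYPE('a)" and sr: "stable_range_1_5 TYPE('a)"
    and hx: "x \<noteq> 0" and hz: "z = 0 \<longrightarrow> y = 0" and hC: "C = mk2 x 0 y z"
    and h: "A ** X + B ** Y + C ** Z = mat 1"
  shows "\<exists>T X Z. (A + B ** T) ** X + C ** Z = mat 1"
proof -
  obtain T0 W0 p q where pq0: "(A + B ** T0 + C ** W0)$2$1 * p + (A + B ** T0 + C ** W0)$2$2 * q = 1"
    using step1[OF sr h] by blast
  define A1 where "A1 = A + B ** T0 + C ** W0"
  have pq: "A1$2$1 * p + A1$2$2 * q = 1" using pq0 A1_def by simp
  define Y1 where "Y1 = Y - T0 ** X"
  define Z1 where "Z1 = Z - W0 ** X"
  have h1: "A1 ** X + B ** Y1 + C ** Z1 = mat 1"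
  proof -
    have "A1 ** X + B ** Y1 + C ** Z1 = A ** X + B ** Y + C ** Z"
      unfolding A1_def Y1_def Z1_def by (simp add: vec_eq_iff forall_2 mult_nth algebra_simps)
    then show ?thesis using h by simp
  qed
  define V where "V = mk2 (A1$2$2) p (-(A1$2$1)) q"
  define Vi where "Vi = mk2 q (-p) (A1$2$1) (A1$2$2)"
  have VVi: "V ** Vi = mat 1" "Vi ** V = mat 1"
    unfolding V_def Vi_def using pq by (simp_all add: vec_eq_iff forall_2 mult_nth algebra_simps)
  define A2 where "A2 = A1 ** V"
  have A2_21: "A2$2$1 = 0" and A2_22: "A2$2$2 = 1"
    unfolding A2_def V_def using pq by (simp_all add: mult_nth algebra_simps)
  define X2 where "X2 = Vi ** X"
  have "A2 ** X2 = A1 ** X" unfolding A2_def X2_def by (metis VVi(1) matrix_mul_assoc matrix_mul_lid)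
  then have h2: "A2 ** X2 + B ** Y1 + C ** Z1 = mat 1" using h1 by simp
  define m where "m = A2$1$1"
  define n where "n = A2$1$2"
  define k1 where "k1 = x - n*y"
  define k2 where "k2 = -(n*z)"
  define \<beta> where "\<beta> = (B$1$1 - n*B$2$1) * Y1$1$1 + (B$1$2 - n*B$2$2) * Y1$2$1"
  have e: "m * X2$1$1 + \<beta> + k1 * Z1$1$1 + k2 * Z1$2$1 = 1"
  proof -
    have E11: "(A2 ** X2 + B ** Y1 + C ** Z1)$1$1 = 1" using h2 by simp
    have E21: "(A2 ** X2 + B ** Y1 + C ** Z1)$2$1 = 0" using h2 by simp
    have "m * X2$1$1 + \<beta> + k1 * Z1$1$1 + k2 * Z1$2$1 = (A2 ** X2 + B ** Y1 + C ** Z1)$1$1 - n * (A2 ** X2 + B ** Y1 + C ** Z1)$2$1"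
      unfolding m_def n_def \<beta>_def k1_def k2_def hC using A2_21 A2_22 by (simp add: mult_nth algebra_simps)
    then show ?thesis using E11 E21 by simp
  qed
  have knz: "k1 \<noteq> 0 \<or> k2 \<noteq> 0" using hx hz unfolding k1_def k2_def by (cases "z = 0") auto
  obtain d e1 e2 f1 f2 where d: "d = k1*e1 + k2*e2" "k1 = d*f1" "k2 = d*f2" using bez2[OF bez] by blast
  have dnz: "d \<noteq> 0" using knz d(2,3) by auto
  have "m * X2$1$1 + \<beta> * 1 + d * (f1 * Z1$1$1 + f2 * Z1$2$1) = 1" using e d(2,3) by (simp add: algebra_simps)
  from sr_use[OF sr dnz this] obtain r u w where ruw: "(m + \<beta>*r)*u + d*w = 1" by blast
  define T1 where "T1 = mk2 (Y1$1$1 * r) 0 (Y1$2$1 * r) 0"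
  define A3 where "A3 = A2 + B ** T1"
  define \<rho> where "\<rho> = A3$2$1"
  have A3e: "A3$1$1 = m + \<beta>*r + n*\<rho>" "A3$1$2 = n" "A3$2$2 = 1"
    unfolding A3_def T1_def \<rho>_def \<beta>_def m_def n_def using A2_21 A2_22 by (simp_all add: mult_nth algebra_simps)
  define lam where "lam = -(u*\<rho> + e1*w*y + e2*w*z)"
  define X3 where "X3 = mk2 u (-n*u) lam (1 - n*lam)"
  define Z3 where "Z3 = mk2 (e1*w) (-n*e1*w) (e2*w) (-n*e2*w)"
  have key11: "A3$1$1 * u + n*lam + x*(e1*w) = 1"
  proof -
    have "A3$1$1 * u + n*lam + x*(e1*w) = (m + \<beta>*r)*u + d*w"
      by (simp add: A3e lam_def d(1) k1_def k2_def algebra_simps)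
    then show ?thesis using ruw by simp
  qed
  have key21: "\<rho> * u + lam + y*(e1*w) + z*(e2*w) = 0" by (simp add: lam_def algebra_simps)
  have h3: "A3 ** X3 + C ** Z3 = mat 1"
  proof -
    have c11: "(A3 ** X3 + C ** Z3)$1$1 = 1"
    proof -
      have "(A3 ** X3 + C ** Z3)$1$1 = A3$1$1 * u + n*lam + x*(e1*w)"
        by (simp add: mult_nth A3e X3_def Z3_def hC)
      then show ?thesis using key11 by simp
    qed
    have c12: "(A3 ** X3 + C ** Z3)$1$2 = 0"
    proof -
      have "(A3 ** X3 + C ** Z3)$1$2 = n - n * (A3$1$1 * u + n*lam + x*(e1*w))"
        by (simp add: mult_nth A3e X3_def Z3_def hC algebra_simps)
      then show ?thesis using key11 by simp
    qed
    have c21: "(A3 ** X3 + C ** Z3)$2$1 = 0"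
    proof -
      have "(A3 ** X3 + C ** Z3)$2$1 = \<rho> * u + lam + y*(e1*w) + z*(e2*w)"
        by (simp add: mult_nth A3e X3_def Z3_def hC \<rho>_def algebra_simps)
      then show ?thesis using key21 by simp
    qed
    have c22: "(A3 ** X3 + C ** Z3)$2$2 = 1"
    proof -
      have "(A3 ** X3 + C ** Z3)$2$2 = 1 - n * (\<rho> * u + lam + y*(e1*w) + z*(e2*w))"
        by (simp add: mult_nth A3e X3_def Z3_def hC \<rho>_def algebra_simps)
      then show ?thesis using key21 by simp
    qed
    show ?thesis using c11 c12 c21 c22 by (simp add: vec_eq_iff forall_2)
  qed
  have "A3 ** Vi = A1 + B ** (T1 ** Vi)"
    unfolding A3_def A2_def by (simp add: rdistrib matrix_mul_assoc[symmetric] VVi(1))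
  then have eqA: "A + B ** (T0 + T1 ** Vi) = A3 ** Vi - C ** W0"
    unfolding A1_def by (simp add: matrix_add_ldistrib algebra_simps)
  have "(A + B ** (T0 + T1 ** Vi)) ** (V ** X3) + C ** (Z3 + W0 ** (V ** X3)) = A3 ** X3 + C ** Z3"
  proof -
    have "(A3 ** Vi) ** (V ** X3) = A3 ** X3" by (metis VVi(2) matrix_mul_assoc matrix_mul_lid)
    moreover have "(C ** W0) ** (V ** X3) = C ** (W0 ** (V ** X3))" by (simp add: matrix_mul_assoc)
    ultimately show ?thesis unfolding eqA by (simp add: rdiff matrix_add_ldistrib)
  qed
  then show ?thesis using h3 by metis
qed

lemma cancel_l: "Pv ** P = mat 1 \<Longrightarrow> Pv ** (P ** M) = (M::'a::comm_ring_1 mat2)"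
  by (metis matrix_mul_assoc matrix_mul_lid)

lemma norm:
  fixes C :: "'a::idom mat2"
  assumes bez: "bezout_domain TYPE('a)" and Cnz: "C \<noteq> 0"
  shows "\<exists>P Pv Q Qi x y z. P ** Pv = mat 1 \<and> Pv ** P = mat 1 \<and> Q ** Qi = mat 1 \<and>
           P ** C ** Q = mk2 x 0 y z \<and> x \<noteq> 0 \<and> (z = 0 \<longrightarrow> y = 0)"
proof -
  obtain P0 Pv0 :: "'a mat2" where P0: "P0 ** Pv0 = mat 1" "Pv0 ** P0 = mat 1"
    and r1: "(P0 ** C)$1$1 \<noteq> 0 \<or> (P0 ** C)$1$2 \<noteq> 0"
  proof (cases "C$1$1 \<noteq> 0 \<or> C$1$2 \<noteq> 0")
    case True
    then show ?thesis using that[of "mat 1" "mat 1"] by simp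
  next
    case False
    have "C$2$1 \<noteq> 0 \<or> C$2$2 \<noteq> 0"
    proof (rule ccontr)
      assume "\<not> (C$2$1 \<noteq> 0 \<or> C$2$2 \<noteq> 0)"
      then have "C = 0" using False by (simp add: vec_eq_iff forall_2)
      then show False using Cnz by simp
    qed
    moreover have "mk2 0 1 1 0 ** mk2 0 1 1 0 = (mat 1 :: 'a mat2)"
      by (simp add: vec_eq_iff forall_2 mult_nth)
    ultimately show ?thesis using that[of "mk2 0 1 1 0" "mk2 0 1 1 0"] by (simp add: mult_nth)
  qed
  define a where "a = (P0 ** C)$1$1"
  define b where "b = (P0 ** C)$1$2"
  obtain g x' y' p' q' where g: "g = a*x' + b*y'" "a = g*p'" "b = g*q'" using bez2[OF bez] by blast
  have gnz: "g \<noteq> 0" using r1 g(2,3) a_def b_def by auto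
  have "g * 1 = g * (p'*x' + q'*y')" using g by (simp add: algebra_simps)
  then have pq1: "p'*x' + q'*y' = 1" using gnz by (metis mult_left_cancel)
  define Q where "Q = mk2 x' (-q') y' p'"
  define Qi where "Qi = mk2 p' q' (-y') x'"
  have QQ: "Q ** Qi = mat 1" unfolding Q_def Qi_def using pq1
    by (simp add: vec_eq_iff forall_2 mult_nth algebra_simps)
  define C1 where "C1 = P0 ** C ** Q"
  have C1_11: "C1$1$1 = g" unfolding C1_def Q_def using g(1) a_def b_def by (simp add: mult_nth)
  have C1_12: "C1$1$2 = 0"
  proof -
    have "C1$1$2 = -(a*q') + b*p'" unfolding C1_def Q_def a_def b_def by (simp add: mult_nth)
    also have "\<dots> = 0" using g(2,3) by (simp add: algebra_simps)
    finally show ?thesis .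
  qed
  show ?thesis
  proof (cases "C1$2$2 = 0")
    case False
    have "P0 ** C ** Q = mk2 g 0 (C1$2$1) (C1$2$2)"
      using C1_11 C1_12 unfolding C1_def[symmetric] by (simp add: vec_eq_iff forall_2)
    then show ?thesis using P0 QQ gnz False by blast
  next
    case True
    obtain h e f g' y' where hh: "h = g*e + C1$2$1*f" "g = h*g'" "C1$2$1 = h*y'" using bez2[OF bez] by blast
    have hnz: "h \<noteq> 0" using gnz hh(2) by auto
    have "h * 1 = h * (g'*e + y'*f)" using hh by (simp add: algebra_simps)
    then have ef: "g'*e + y'*f = 1" using hnz by (metis mult_left_cancel)
    define P1 where "P1 = mk2 e f (-y') g'"
    define P1i where "P1i = mk2 g' (-f) y' e"
    have PP1: "P1 ** P1i = mat 1" "P1i ** P1 = mat 1" unfolding P1_def P1i_def using ef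
      by (simp_all add: vec_eq_iff forall_2 mult_nth algebra_simps)
    have "P1 ** C1 = mk2 h 0 0 0"
    proof -
      have "(P1 ** C1)$2$1 = -(y'*g) + g'*C1$2$1" unfolding P1_def using C1_11 by (simp add: mult_nth)
      also have "\<dots> = 0" using hh(2,3) by (simp add: algebra_simps)
      finally have e21: "(P1 ** C1)$2$1 = 0" .
      show ?thesis using e21 C1_11 C1_12 True hh(1) unfolding P1_def
        by (simp add: vec_eq_iff forall_2 mult_nth algebra_simps)
    qed
    then have "(P1 ** P0) ** C ** Q = mk2 h 0 0 0" unfolding C1_def by (simp add: matrix_mul_assoc)
    moreover have "(P1 ** P0) ** (Pv0 ** P1i) = mat 1"
      by (metis P0(1) PP1(1) matrix_mul_assoc matrix_mul_rid)
    moreover have "(Pv0 ** P1i) ** (P1 ** P0) = mat 1"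
      by (metis P0(2) PP1(2) matrix_mul_assoc matrix_mul_rid)
    ultimately show ?thesis using QQ hnz by blast
  qed
qed

lemma rev_dir:
  assumes bez: "bezout_domain TYPE('a::idom)" and sr: "stable_range_1_5 TYPE('a)"
  shows "mat2_stable_range_1_5 TYPE('a)"
  unfolding mat2_stable_range_1_5_def
proof (intro allI impI)
  fix A B C :: "'a mat2"
  assume Cnz: "C \<noteq> 0" and "left_rel_prime3 A B C"
  then obtain X Y Z where h: "A ** X + B ** Y + C ** Z = mat 1" by (auto simp: lrp3_iff)
  obtain P Pv Q Qi x y z where PQ: "P ** Pv = mat 1" "Pv ** P = mat 1" "Q ** Qi = mat 1"
    and CC: "P ** C ** Q = mk2 x 0 y z" and xz: "x \<noteq> 0" "z = 0 \<longrightarrow> y = 0"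
    using norm[OF bez Cnz] by blast
  have "(P ** A) ** (X ** Pv) + (P ** B) ** (Y ** Pv) + (P ** C ** Q) ** (Qi ** Z ** Pv)
        = P ** (A ** X + B ** Y + C ** Z) ** Pv"
  proof -
    have "(P ** C ** Q) ** (Qi ** Z ** Pv) = P ** (C ** Z) ** Pv"
      by (metis PQ(3) matrix_mul_assoc matrix_mul_rid)
    then show ?thesis by (simp add: matrix_add_ldistrib rdistrib matrix_mul_assoc)
  qed
  then have h': "(P ** A) ** (X ** Pv) + (P ** B) ** (Y ** Pv) + (P ** C ** Q) ** (Qi ** Z ** Pv) = mat 1"
    using h PQ(1) by simp
  obtain T X' Z' where h2: "(P ** A + (P ** B) ** T) ** X' + (P ** C ** Q) ** Z' = mat 1"
    using core[OF bez sr xz(1) xz(2) CC h'] by blast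
  have "P ** A + (P ** B) ** T = P ** (A + B ** T)" by (simp add: matrix_add_ldistrib matrix_mul_assoc)
  then have "P ** ((A + B ** T) ** X' + C ** (Q ** Z')) = mat 1"
    using h2 by (simp add: matrix_add_ldistrib matrix_mul_assoc)
  then have "Pv ** (P ** ((A + B ** T) ** X' + C ** (Q ** Z'))) = Pv" by simp
  then have "(A + B ** T) ** X' + C ** (Q ** Z') = Pv" using cancel_l[OF PQ(2)] by simp
  then have "((A + B ** T) ** X' + C ** (Q ** Z')) ** P = mat 1" using PQ(2) by simp
  then have "(A + B ** T) ** (X' ** P) + C ** (Q ** Z' ** P) = mat 1"
    by (simp add: rdistrib matrix_mul_assoc)
  then show "\<exists>T. left_rel_prime2 (A + B ** T) C" by (auto simp: lrp2_iff)
qed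

lemma fwd_dir:
  assumes "mat2_stable_range_1_5 TYPE('a::idom)"
  shows "stable_range_1_5 TYPE('a)"
  unfolding stable_range_1_5_def gen3_iff gen2_iff
proof (intro allI impI)
  fix a b c :: 'a
  assume cnz: "c \<noteq> 0" and "\<exists>x y z. a*x + b*y + c*z = 1"
  then obtain x y z where e: "a*x + b*y + c*z = 1" by blast
  define A :: "'a mat2" where "A = mk2 a 0 0 1"
  define B :: "'a mat2" where "B = mk2 b 0 0 0"
  define C :: "'a mat2" where "C = mk2 c 0 0 c"
  have "C \<noteq> 0" using cnz unfolding C_def by (metis mk2_nth(1) zero_index)
  moreover have "A ** mk2 x 0 0 1 + B ** mk2 y 0 0 0 + C ** mk2 z 0 0 0 = mat 1"
    unfolding A_def B_def C_def using e by (simp add: vec_eq_iff forall_2 mult_nth)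
  then have "left_rel_prime3 A B C" by (auto simp: lrp3_iff)
  ultimately obtain T where "left_rel_prime2 (A + B ** T) C" using assms
    unfolding mat2_stable_range_1_5_def by blast
  then obtain X Z where h: "(A + B ** T) ** X + C ** Z = mat 1" by (auto simp: lrp2_iff)
  have e21: "X$2$1 + c * Z$2$1 = 0"
    using arg_cong[OF h, of "\<lambda>M. M$2$1"] unfolding A_def B_def C_def by (simp add: mult_nth)
  have e11: "(a + b * T$1$1) * X$1$1 + b * T$1$2 * X$2$1 + c * Z$1$1 = 1"
    using arg_cong[OF h, of "\<lambda>M. M$1$1"] unfolding A_def B_def C_def by (simp add: mult_nth algebra_simps)
  have "X$2$1 = - (c * Z$2$1)" using e21 by (simp add: eq_neg_iff_add_eq_0)
  then have "(a + b * T$1$1) * X$1$1 + c * (Z$1$1 - b * T$1$2 * Z$2$1) = 1"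
    using e11 by (simp add: algebra_simps)
  then show "\<exists>r u v. (a + b * r) * u + c * v = 1" by blast
qed

theorem theorem2p20:
  assumes "bezout_domain TYPE('a::idom)"
  shows "mat2_stable_range_1_5 TYPE('a) \<longleftrightarrow> stable_range_1_5 TYPE('a)"
  using fwd_dir rev_dir[OF assms] by blast

end
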